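(* Let $G$ be a locally compact group, $K$ a compact subgroup with normalized Haar measure $dk$, $\delta>0$, and $\mu:G\to\mathbb{C}$ a continuous unitary character. Let $f,g\in\mathcal{C}(G)$ with $f$ unbounded satisfy $$\Big|\int_K f(xkyk^{-1})\,dk+\mu(y)\int_K f(xky^{-1}k^{-1})\,dk-2f(x)g(y)\Big|\le\delta\quad\text{for all }x,y\in G. \qquad (5.1)$$ Then: (i) for every $x\in G$, the pair $(C_K(L_{x^{-1}}f),g)$ satisfies (5.1), where $C_K(L_{x^{-1}}f)(y)=\int_Kf(xkyk^{-1})\,dk$; (ii) $g(y)=\mu(y)g(y^{-1})$ for all $y\in G$; (iii) $g$ is $K$-central.
   Context: A unitary character is a continuous homomorphism $\mu:G\to\{z\in\mathbb{C}:|z|=1\}$. $(L_af)(y)=f(a^{-1}y)$, $(C_Kf)(x)=\int_Kf(kxk^{-1})\,dk$. A function $g$ is $K$-central if $g(kx)=g(xk)$ for all $k\in K,x\in G$. *)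

theory Defs
  imports "HOL-Analysis.Analysis" "HOL-Probability.Probability" "HOL-Algebra.Group"
begin

definition lc_group :: "('a::t2_space, 'b) monoid_scheme \<Rightarrow> bool" where
  "lc_group G \<longleftrightarrow> group G
     \<and> continuous_on (carrier G \<times> carrier G) (\<lambda>p. fst p \<otimes>\<^bsub>G\<^esub> snd p)
     \<and> continuous_on (carrier G) (\<lambda>x. inv\<^bsub>G\<^esub> x)
     \<and> locally_compact_space (top_of_set (carrier G))"

definition normalized_haar :: "('a::t2_space, 'b) monoid_scheme \<Rightarrow> 'a set \<Rightarrow> 'a measure \<Rightarrow> bool" where
  "normalized_haar G K M \<longleftrightarrow>
     sets M = sets (restrict_space borel K) \<and> space M = K \<and> prob_space M
     \<and> (\<forall>h\<in>K. distr M M (\<lambda>k. h \<otimes>\<^bsub>G\<^esub> k) = M \<and> distr M M (\<lambda>k. k \<otimes>\<^bsub>G\<^esub> h) = M)"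

definition unitary_character :: "('a::topological_space, 'b) monoid_scheme \<Rightarrow> ('a \<Rightarrow> complex) \<Rightarrow> bool" where
  "unitary_character G \<mu> \<longleftrightarrow> continuous_on (carrier G) \<mu>
     \<and> (\<forall>x\<in>carrier G. \<forall>y\<in>carrier G. \<mu> (x \<otimes>\<^bsub>G\<^esub> y) = \<mu> x * \<mu> y)
     \<and> (\<forall>x\<in>carrier G. cmod (\<mu> x) = 1)"

definition satisfies_5_1 ::
  "('a, 'b) monoid_scheme \<Rightarrow> 'a measure \<Rightarrow> ('a \<Rightarrow> complex) \<Rightarrow> real \<Rightarrow> ('a \<Rightarrow> complex) \<Rightarrow> ('a \<Rightarrow> complex) \<Rightarrow> bool" where
  "satisfies_5_1 G M \<mu> \<delta> f g \<longleftrightarrow>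
     (\<forall>x\<in>carrier G. \<forall>y\<in>carrier G.
        cmod ((\<integral>k. f (x \<otimes>\<^bsub>G\<^esub> k \<otimes>\<^bsub>G\<^esub> y \<otimes>\<^bsub>G\<^esub> inv\<^bsub>G\<^esub> k) \<partial>M)
            + \<mu> y * (\<integral>k. f (x \<otimes>\<^bsub>G\<^esub> k \<otimes>\<^bsub>G\<^esub> inv\<^bsub>G\<^esub> y \<otimes>\<^bsub>G\<^esub> inv\<^bsub>G\<^esub> k) \<partial>M)
            - 2 * f x * g y) \<le> \<delta>)"

definition K_central :: "('a, 'b) monoid_scheme \<Rightarrow> 'a set \<Rightarrow> ('a \<Rightarrow> 'c) \<Rightarrow> bool" where
  "K_central G K g \<longleftrightarrow> (\<forall>k\<in>K. \<forall>x\<in>carrier G. g (k \<otimes>\<^bsub>G\<^esub> x) = g (x \<otimes>\<^bsub>G\<^esub> k))"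

end

theory Submission
  imports Defs
begin


lemma tube:
  fixes \<Phi> :: "'a::topological_space \<times> 'a \<Rightarrow> 'c::metric_space"
  assumes K: "compact K" and c: "continuous_on (K\<times>K) \<Phi>" and k0: "k0 \<in> K" and e: "e > 0"
  shows "\<exists>U. open U \<and> k0 \<in> U \<and> (\<forall>k\<in>K\<inter>U. \<forall>h\<in>K. dist (\<Phi>(k,h)) (\<Phi>(k0,h)) < e)"
proof -
  have "\<forall>h\<in>K. \<exists>AB. open (fst AB) \<and> open (snd AB) \<and> k0 \<in> fst AB \<and> h \<in> snd AB \<and>
      (\<forall>k\<in>K\<inter>fst AB. \<forall>h'\<in>K\<inter>snd AB. dist (\<Phi>(k,h')) (\<Phi>(k0,h)) < e/2)"
  proof
    fix h assume h: "h \<in> K"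
    have "open (ball (\<Phi>(k0,h)) (e/2))" "\<Phi>(k0,h) \<in> ball (\<Phi>(k0,h)) (e/2)" using e by auto
    then obtain S where S: "open S" "(k0,h) \<in> S" "\<forall>y\<in>K\<times>K. y \<in> S \<longrightarrow> \<Phi> y \<in> ball (\<Phi>(k0,h)) (e/2)"
      using c k0 h unfolding continuous_on_topological by (metis SigmaI)
    then obtain A B where AB: "open A" "open B" "(k0,h) \<in> A \<times> B" "A \<times> B \<subseteq> S"
      by (metis open_prod_elim)
    show "\<exists>AB. open (fst AB) \<and> open (snd AB) \<and> k0 \<in> fst AB \<and> h \<in> snd AB \<and>
      (\<forall>k\<in>K\<inter>fst AB. \<forall>h'\<in>K\<inter>snd AB. dist (\<Phi>(k,h')) (\<Phi>(k0,h)) < e/2)"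
      apply (rule exI[of _ "(A,B)"])
      using AB S by (auto simp: dist_commute subset_iff)
  qed
  then obtain AB where AB: "\<forall>h\<in>K. open (fst (AB h)) \<and> open (snd (AB h)) \<and> k0 \<in> fst (AB h) \<and> h \<in> snd (AB h) \<and>
      (\<forall>k\<in>K\<inter>fst (AB h). \<forall>h'\<in>K\<inter>snd (AB h). dist (\<Phi>(k,h')) (\<Phi>(k0,h)) < e/2)"
    by metis
  obtain H where H: "H \<subseteq> K" "finite H" "K \<subseteq> (\<Union>h\<in>H. snd (AB h))"
    using compactE_image[OF K, of K "\<lambda>h. snd (AB h)"] AB by blast
  show ?thesis
  proof (intro exI conjI ballI)
    show "open (\<Inter>h\<in>H. fst (AB h))" using H AB by blast
    show "k0 \<in> (\<Inter>h\<in>H. fst (AB h))" using H AB by blast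
    fix k h' assume k: "k \<in> K \<inter> (\<Inter>h\<in>H. fst (AB h))" and h': "h' \<in> K"
    then obtain hj where hj: "hj \<in> H" "h' \<in> snd (AB hj)" using H by blast
    have "dist (\<Phi>(k,h')) (\<Phi>(k0,hj)) < e/2" using AB hj H k h' by blast
    moreover have "dist (\<Phi>(k0,h')) (\<Phi>(k0,hj)) < e/2" using AB hj H k0 h' by blast
    ultimately show "dist (\<Phi>(k,h')) (\<Phi>(k0,h')) < e" by (rule dist_triangle_half_l)
  qed
qed

lemma approx:
  fixes \<Phi> :: "'a::topological_space \<times> 'a \<Rightarrow> 'c::metric_space"
  assumes K: "compact K" and c: "continuous_on (K\<times>K) \<Phi>" and ne: "K \<noteq> {}" and e: "e > 0"
  shows "\<exists>cs::nat\<Rightarrow>'a. \<exists>V::nat\<Rightarrow>'a set. (\<forall>j. open (V j)) \<and> (\<forall>j. cs j \<in> K) \<and> (\<forall>k\<in>K. \<exists>j. k \<in> V j)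
     \<and> (\<forall>j. \<forall>k\<in>K\<inter>V j. \<forall>h\<in>K. dist (\<Phi>(k,h)) (\<Phi>(cs j,h)) < e)"
proof -
  obtain U where U: "\<forall>k0\<in>K. open (U k0) \<and> k0 \<in> U k0 \<and> (\<forall>k\<in>K\<inter>U k0. \<forall>h\<in>K. dist (\<Phi>(k,h)) (\<Phi>(k0,h)) < e)"
    using tube[OF K c _ e] by metis
  obtain C where C: "C \<subseteq> K" "finite C" "K \<subseteq> (\<Union>k\<in>C. U k)"
    using compactE_image[OF K, of K U] U by blast
  obtain n :: nat and f where nf: "C = f ` {i. i < n}" using finite_imp_nat_seg_image_inj_on[OF C(2)] by blast
  obtain k1 where k1: "k1 \<in> K" using ne by blast
  define cs where "cs j = (if j < n then f j else k1)" for j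
  define V where "V j = (if j < n then U (f j) else {})" for j
  show ?thesis
  proof (intro exI[of _ cs] exI[of _ V] conjI allI ballI)
    fix j
    show "open (V j)" using U C nf by (auto simp: V_def)
    show "cs j \<in> K" using C nf k1 by (auto simp: cs_def)
  next
    fix k assume "k \<in> K"
    then obtain c where "c \<in> C" "k \<in> U c" using C by blast
    then show "\<exists>j. k \<in> V j" using nf by (auto simp: V_def)
  next
    fix j k h assume k: "k \<in> K \<inter> V j" and h: "h \<in> K"
    then have "j < n" by (auto simp: V_def split: if_splits)
    then show "dist (\<Phi>(k,h)) (\<Phi>(cs j,h)) < e" using k h U C nf by (auto simp: V_def cs_def)
  qed
qed

lemma meas_M:
  assumes "sets M = sets (restrict_space borel K)" "continuous_on K \<phi>"
  shows "\<phi> \<in> borel_measurable M"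
  by (subst measurable_cong_sets[OF assms(1) refl]) (rule borel_measurable_continuous_on_restrict[OF assms(2)])

lemma cont_slice:
  assumes "continuous_on (K\<times>K) \<Phi>" "c \<in> K"
  shows "continuous_on K (\<lambda>h. \<Phi>(c,h))"
  by (rule continuous_on_compose2[OF assms(1)]) (use assms(2) in \<open>auto intro!: continuous_intros\<close>)

lemma meas_pair:
  fixes \<Phi> :: "'a::topological_space \<times> 'a \<Rightarrow> 'c::metric_space"
  assumes sM: "sets M = sets (restrict_space borel K)" and spM: "space M = K"
    and K: "compact K" and ne: "K \<noteq> {}" and c: "continuous_on (K\<times>K) \<Phi>"
  shows "\<Phi> \<in> borel_measurable (M \<Otimes>\<^sub>M M)"
proof -
  define P where "P n cs V \<longleftrightarrow> (\<forall>j. open (V j)) \<and> (\<forall>j. cs j \<in> K) \<and> (\<forall>k\<in>K. \<exists>j. k \<in> V j)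
     \<and> (\<forall>j. \<forall>k\<in>K\<inter>V j. \<forall>h\<in>K. dist (\<Phi>(k,h)) (\<Phi>(cs j,h)) < inverse (real (Suc n)))"
    for n :: nat and cs :: "nat \<Rightarrow> 'a" and V :: "nat \<Rightarrow> 'a set"
  have "\<forall>n. \<exists>cs V. P n cs V" unfolding P_def
    by (intro allI) (rule approx[OF K c ne], simp)
  then have "\<exists>cs. \<forall>n. \<exists>V. P n (cs n) V" by (rule choice)
  then obtain cs where "\<forall>n. \<exists>V. P n (cs n) V" by blast
  then have "\<exists>V. \<forall>n. P n (cs n) (V n)" by (rule choice)
  then obtain V where "\<forall>n. P n (cs n) (V n)" by blast
  then have cV: "\<And>n. (\<forall>j. open (V n j)) \<and> (\<forall>j. cs n j \<in> K) \<and> (\<forall>k\<in>K. \<exists>j. k \<in> V n j)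
     \<and> (\<forall>j. \<forall>k\<in>K\<inter>V n j. \<forall>h\<in>K. dist (\<Phi>(k,h)) (\<Phi>(cs n j,h)) < inverse (real (Suc n)))"
    unfolding P_def by blast
  define idx where "idx n k = (LEAST j. k \<in> V n j)" for n k
  have idxV: "k \<in> V n (idx n k)" if "k \<in> K" for n k
  proof -
    have "\<exists>j. k \<in> V n j" using cV[of n] that by blast
    then show ?thesis unfolding idx_def by (rule LeastI_ex)
  qed
  have idx_meas: "idx n \<in> measurable M (count_space UNIV)" for n
    unfolding measurable_count_space_eq2_countable
  proof (intro conjI ballI)
    show "idx n \<in> space M \<rightarrow> UNIV" by simp
    fix i :: nat
    have eq: "idx n -` {i} \<inter> space M = K \<inter> (V n i \<inter> (\<Inter>j\<in>{..<i}. - V n j))"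
    proof (intro equalityI subsetI)
      fix k assume k: "k \<in> idx n -` {i} \<inter> space M"
      then have kK: "k \<in> K" and ki: "idx n k = i" using spM by auto
      have "k \<in> V n i" using idxV[OF kK, of n] ki by simp
      moreover have "k \<notin> V n j" if "j < i" for j
        using not_less_Least[of j "\<lambda>j. k \<in> V n j"] that ki unfolding idx_def by simp
      ultimately show "k \<in> K \<inter> (V n i \<inter> (\<Inter>j\<in>{..<i}. - V n j))" using kK by blast
    next
      fix k assume k: "k \<in> K \<inter> (V n i \<inter> (\<Inter>j\<in>{..<i}. - V n j))"
      have "idx n k = i" unfolding idx_def
      proof (rule Least_equality)
        show "k \<in> V n i" using k by blast
        fix y assume "k \<in> V n y"
        show "i \<le> y"
        proof (rule ccontr)
          assume "\<not> i \<le> y"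
          then have "y \<in> {..<i}" by simp
          then have "k \<in> - V n y" using k by blast
          then show False using \<open>k \<in> V n y\<close> by blast
        qed
      qed
      then show "k \<in> idx n -` {i} \<inter> space M" using k spM by blast
    qed
    have "V n i \<inter> (\<Inter>j\<in>{..<i}. - V n j) \<in> sets borel"
      using cV[of n] by (intro sets.Int borel_open borel_closed closed_INT) auto
    then show "idx n -` {i} \<inter> space M \<in> sets M"
      unfolding eq sM sets_restrict_space by blast
  qed
  have slice: "(\<lambda>p. \<Phi>(cs n i, snd p)) \<in> borel_measurable (M \<Otimes>\<^sub>M M)" for n i
    by (rule measurable_compose[OF measurable_snd meas_M[OF sM cont_slice[OF c]]]) (use cV in blast)
  have approxm: "(\<lambda>p. \<Phi>(cs n (idx n (fst p)), snd p)) \<in> borel_measurable (M \<Otimes>\<^sub>M M)" for n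
    by (rule measurable_compose_countable'[where f="\<lambda>i p. \<Phi>(cs n i, snd p)" and I=UNIV
        and g="\<lambda>p. idx n (fst p)", OF slice measurable_compose[OF measurable_fst idx_meas]]) simp
  show ?thesis
  proof (rule borel_measurable_LIMSEQ_metric[OF approxm])
    fix p assume p: "p \<in> space (M \<Otimes>\<^sub>M M)"
    then obtain k h where kh: "p = (k,h)" "k \<in> K" "h \<in> K" by (auto simp: space_pair_measure spM)
    have "(\<lambda>n. dist (\<Phi>(cs n (idx n k), h)) (\<Phi>(k,h))) \<longlonglongrightarrow> 0"
    proof (rule Lim_null_comparison[OF _ LIMSEQ_inverse_real_of_nat])
      have "dist (\<Phi>(k,h)) (\<Phi>(cs n (idx n k),h)) < inverse (real (Suc n))" for n
        using cV[of n] idxV[OF kh(2), of n] kh(2,3) by blast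
      then show "\<forall>\<^sub>F n in sequentially. norm (dist (\<Phi>(cs n (idx n k), h)) (\<Phi>(k,h))) \<le> inverse (real (Suc n))"
        by (intro always_eventually allI) (simp add: dist_commute less_imp_le)
    qed
    then show "(\<lambda>n. \<Phi>(cs n (idx n (fst p)), snd p)) \<longlonglongrightarrow> \<Phi> p"
      unfolding kh(1) fst_conv snd_conv by (rule tendsto_dist_iff[THEN iffD2])
  qed
qed




lemma int_pair:
  fixes \<Phi> :: "'a::topological_space \<times> 'a \<Rightarrow> complex"
  assumes sM: "sets M = sets (restrict_space borel K)" and spM: "space M = K" and pM: "prob_space M"
    and K: "compact K" and ne: "K \<noteq> {}" and c: "continuous_on (K\<times>K) \<Phi>"
  shows "integrable (M \<Otimes>\<^sub>M M) \<Phi>"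
proof -
  interpret pair_prob_space M M
    by (simp add: pair_prob_space_def pair_sigma_finite_def prob_space_imp_sigma_finite pM)
  have "compact (\<Phi> ` (K\<times>K))" by (intro compact_continuous_image c compact_Times K)
  then obtain B where B: "\<forall>z\<in>\<Phi> ` (K\<times>K). norm z \<le> B" by (meson compact_imp_bounded bounded_iff)
  show ?thesis
  proof (rule P.integrable_const_bound[where B=B])
    show "AE x in M \<Otimes>\<^sub>M M. norm (\<Phi> x) \<le> B"
      using B by (intro AE_I2) (auto simp: space_pair_measure spM)
    show "\<Phi> \<in> borel_measurable (M \<Otimes>\<^sub>M M)" by (rule meas_pair[OF sM spM K ne c])
  qed
qed

lemma fubini_K:
  fixes \<Phi> :: "'a::topological_space \<times> 'a \<Rightarrow> complex"
  assumes sM: "sets M = sets (restrict_space borel K)" and spM: "space M = K" and pM: "prob_space M"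
    and K: "compact K" and ne: "K \<noteq> {}" and c: "continuous_on (K\<times>K) \<Phi>"
  shows "(\<integral>h. (\<integral>k. \<Phi>(k,h) \<partial>M) \<partial>M) = (\<integral>k. (\<integral>h. \<Phi>(k,h) \<partial>M) \<partial>M)"
    and "integrable M (\<lambda>k. \<integral>h. \<Phi>(k,h) \<partial>M)"
proof -
  interpret pair_prob_space M M
    by (simp add: pair_prob_space_def pair_sigma_finite_def prob_space_imp_sigma_finite pM)
  have i: "integrable (M \<Otimes>\<^sub>M M) \<Phi>" by (rule int_pair[OF assms])
  show "(\<integral>h. (\<integral>k. \<Phi>(k,h) \<partial>M) \<partial>M) = (\<integral>k. (\<integral>h. \<Phi>(k,h) \<partial>M) \<partial>M)"
    using Fubini_integral[of "\<lambda>k h. \<Phi>(k,h)"] i by simp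
  show "integrable M (\<lambda>k. \<integral>h. \<Phi>(k,h) \<partial>M)" by (rule integrable_fst'[OF i])
qed

lemma int_M:
  fixes \<phi> :: "'a::topological_space \<Rightarrow> complex"
  assumes sM: "sets M = sets (restrict_space borel K)" and spM: "space M = K" and pM: "prob_space M"
    and K: "compact K" and c: "continuous_on K \<phi>"
  shows "integrable M \<phi>"
proof -
  interpret prob_space M by (rule pM)
  have "compact (\<phi> ` K)" by (intro compact_continuous_image c K)
  then obtain B where B: "\<forall>z\<in>\<phi> ` K. norm z \<le> B" by (meson compact_imp_bounded bounded_iff)
  show ?thesis
  proof (rule integrable_const_bound[where B=B])
    show "AE x in M. norm (\<phi> x) \<le> B"
      using B by (intro AE_I2) (auto simp: spM)
    show "\<phi> \<in> borel_measurable M" by (rule meas_M[OF sM c])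
  qed
qed

locale hs =
  fixes G :: "('a::t2_space, 'b) monoid_scheme" and K :: "'a set" and M :: "'a measure"
  assumes grp: "group G"
    and cm: "continuous_on (carrier G \<times> carrier G) (\<lambda>p. fst p \<otimes>\<^bsub>G\<^esub> snd p)"
    and ci: "continuous_on (carrier G) (\<lambda>x. inv\<^bsub>G\<^esub> x)"
    and sub: "subgroup K G" and cK: "compact K"
    and sM: "sets M = sets (restrict_space borel K)" and spM: "space M = K" and pM: "prob_space M"
    and linv: "\<And>h. h \<in> K \<Longrightarrow> distr M M (\<lambda>k. h \<otimes>\<^bsub>G\<^esub> k) = M"
    and rinv: "\<And>h. h \<in> K \<Longrightarrow> distr M M (\<lambda>k. k \<otimes>\<^bsub>G\<^esub> h) = M"
begin

lemma KG: "K \<subseteq> carrier G" using sub by (rule subgroup.subset)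
lemma Kne: "K \<noteq> {}" using subgroup.one_closed[OF sub] by blast

lemma cont_m:
  assumes "continuous_on S a" "continuous_on S b" "\<And>s. s \<in> S \<Longrightarrow> a s \<in> carrier G"
    "\<And>s. s \<in> S \<Longrightarrow> b s \<in> carrier G"
  shows "continuous_on S (\<lambda>s. a s \<otimes>\<^bsub>G\<^esub> b s)"
  using continuous_on_compose2[OF cm continuous_on_Pair[OF assms(1,2)]] assms(3,4) by auto

lemma cont_i:
  assumes "continuous_on S a" "\<And>s. s \<in> S \<Longrightarrow> a s \<in> carrier G"
  shows "continuous_on S (\<lambda>s. inv\<^bsub>G\<^esub> a s)"
  using continuous_on_compose2[OF ci assms(1)] assms(2) by auto

lemma meas_trans:
  assumes "continuous_on K t" "\<And>k. k \<in> K \<Longrightarrow> t k \<in> K"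
  shows "t \<in> measurable M M"
proof -
  have "t \<in> measurable (restrict_space borel K) (restrict_space borel K)"
    by (rule measurable_restrict_space2) (use assms borel_measurable_continuous_on_restrict[OF assms(1)] in \<open>auto simp: space_restrict_space\<close>)
  then show ?thesis
    using measurable_cong_sets[OF sM sM] by simp
qed

lemma left_invar:
  fixes \<phi> :: "'a \<Rightarrow> complex"
  assumes a: "a \<in> K" and c: "continuous_on K \<phi>"
  shows "(\<integral>k. \<phi> (a \<otimes>\<^bsub>G\<^esub> k) \<partial>M) = (\<integral>k. \<phi> k \<partial>M)"
proof -
  have m: "(\<lambda>k. a \<otimes>\<^bsub>G\<^esub> k) \<in> measurable M M"
    by (rule meas_trans) (use a KG subgroup.m_closed[OF sub] in \<open>auto intro!: cont_m continuous_intros\<close>)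
  have "(\<integral>k. \<phi> k \<partial>M) = integral\<^sup>L (distr M M (\<lambda>k. a \<otimes>\<^bsub>G\<^esub> k)) \<phi>" using linv[OF a] by simp
  also have "\<dots> = (\<integral>k. \<phi> (a \<otimes>\<^bsub>G\<^esub> k) \<partial>M)" by (rule integral_distr[OF m meas_M[OF sM c]])
  finally show ?thesis by simp
qed

lemma right_invar:
  fixes \<phi> :: "'a \<Rightarrow> complex"
  assumes a: "a \<in> K" and c: "continuous_on K \<phi>"
  shows "(\<integral>k. \<phi> (k \<otimes>\<^bsub>G\<^esub> a) \<partial>M) = (\<integral>k. \<phi> k \<partial>M)"
proof -
  have m: "(\<lambda>k. k \<otimes>\<^bsub>G\<^esub> a) \<in> measurable M M"
    by (rule meas_trans) (use a KG subgroup.m_closed[OF sub] in \<open>auto intro!: cont_m continuous_intros\<close>)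
  have "(\<integral>k. \<phi> k \<partial>M) = integral\<^sup>L (distr M M (\<lambda>k. k \<otimes>\<^bsub>G\<^esub> a)) \<phi>" using rinv[OF a] by simp
  also have "\<dots> = (\<integral>k. \<phi> (k \<otimes>\<^bsub>G\<^esub> a) \<partial>M)" by (rule integral_distr[OF m meas_M[OF sM c]])
  finally show ?thesis by simp
qed

end




lemma prob_norm_bound:
  fixes D :: "'a \<Rightarrow> complex"
  assumes pM: "prob_space M" and i: "integrable M D" and b: "\<And>k. k \<in> space M \<Longrightarrow> norm (D k) \<le> d"
  shows "norm (\<integral>k. D k \<partial>M) \<le> d"
proof -
  interpret prob_space M by (rule pM)
  have "norm (\<integral>k. D k \<partial>M) \<le> (\<integral>k. norm (D k) \<partial>M)" by (rule integral_norm_bound)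
  also have "\<dots> \<le> (\<integral>k. d \<partial>M)" using i b by (intro integral_mono) auto
  also have "\<dots> = d" by (simp add: prob_space)
  finally show ?thesis .
qed

context hs begin

lemma alg:
  assumes "k \<in> carrier G" "h \<in> carrier G" "x \<in> carrier G" "z \<in> carrier G" "u \<in> carrier G"
  shows "x \<otimes>\<^bsub>G\<^esub> k \<otimes>\<^bsub>G\<^esub> (z \<otimes>\<^bsub>G\<^esub> (inv\<^bsub>G\<^esub> k \<otimes>\<^bsub>G\<^esub> h) \<otimes>\<^bsub>G\<^esub> u \<otimes>\<^bsub>G\<^esub> inv\<^bsub>G\<^esub> (inv\<^bsub>G\<^esub> k \<otimes>\<^bsub>G\<^esub> h)) \<otimes>\<^bsub>G\<^esub> inv\<^bsub>G\<^esub> k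
    = x \<otimes>\<^bsub>G\<^esub> k \<otimes>\<^bsub>G\<^esub> z \<otimes>\<^bsub>G\<^esub> inv\<^bsub>G\<^esub> k \<otimes>\<^bsub>G\<^esub> h \<otimes>\<^bsub>G\<^esub> u \<otimes>\<^bsub>G\<^esub> inv\<^bsub>G\<^esub> h"
proof -
  interpret G: group G by (rule grp)
  show ?thesis using assms by (simp add: G.m_assoc G.inv_mult_group)
qed

lemma key:
  fixes f :: "'a \<Rightarrow> complex"
  assumes cf: "continuous_on (carrier G) f" and x: "x \<in> carrier G" and z: "z \<in> carrier G"
    and u: "u \<in> carrier G"
  shows "(\<integral>h. (\<integral>k. f (x \<otimes>\<^bsub>G\<^esub> k \<otimes>\<^bsub>G\<^esub> (z \<otimes>\<^bsub>G\<^esub> h \<otimes>\<^bsub>G\<^esub> u \<otimes>\<^bsub>G\<^esub> inv\<^bsub>G\<^esub> h) \<otimes>\<^bsub>G\<^esub> inv\<^bsub>G\<^esub> k) \<partial>M) \<partial>M)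
       = (\<integral>k. (\<integral>h. f (x \<otimes>\<^bsub>G\<^esub> k \<otimes>\<^bsub>G\<^esub> z \<otimes>\<^bsub>G\<^esub> inv\<^bsub>G\<^esub> k \<otimes>\<^bsub>G\<^esub> h \<otimes>\<^bsub>G\<^esub> u \<otimes>\<^bsub>G\<^esub> inv\<^bsub>G\<^esub> h) \<partial>M) \<partial>M)"
    and "integrable M (\<lambda>k. \<integral>h. f (x \<otimes>\<^bsub>G\<^esub> k \<otimes>\<^bsub>G\<^esub> z \<otimes>\<^bsub>G\<^esub> inv\<^bsub>G\<^esub> k \<otimes>\<^bsub>G\<^esub> h \<otimes>\<^bsub>G\<^esub> u \<otimes>\<^bsub>G\<^esub> inv\<^bsub>G\<^esub> h) \<partial>M)"
proof -
  interpret G: group G by (rule grp)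
  define \<Phi> where "\<Phi> p = f (x \<otimes>\<^bsub>G\<^esub> fst p \<otimes>\<^bsub>G\<^esub> (z \<otimes>\<^bsub>G\<^esub> snd p \<otimes>\<^bsub>G\<^esub> u \<otimes>\<^bsub>G\<^esub> inv\<^bsub>G\<^esub> snd p) \<otimes>\<^bsub>G\<^esub> inv\<^bsub>G\<^esub> fst p)" for p
  have inG: "p \<in> K \<times> K \<Longrightarrow> fst p \<in> carrier G \<and> snd p \<in> carrier G" for p using KG by auto
  have c\<Phi>: "continuous_on (K\<times>K) \<Phi>"
    unfolding \<Phi>_def
    by (rule continuous_on_compose2[OF cf])
       (use inG x z u in \<open>auto intro!: cont_m cont_i continuous_intros\<close>)
  note fb = fubini_K[OF sM spM pM cK Kne c\<Phi>]
  have eq: "(\<integral>h. \<Phi>(k,h) \<partial>M) = (\<integral>h. f (x \<otimes>\<^bsub>G\<^esub> k \<otimes>\<^bsub>G\<^esub> z \<otimes>\<^bsub>G\<^esub> inv\<^bsub>G\<^esub> k \<otimes>\<^bsub>G\<^esub> h \<otimes>\<^bsub>G\<^esub> u \<otimes>\<^bsub>G\<^esub> inv\<^bsub>G\<^esub> h) \<partial>M)"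
    if k: "k \<in> K" for k
  proof -
    have ik: "inv\<^bsub>G\<^esub> k \<in> K" using subgroup.m_inv_closed[OF sub k] .
    have "(\<integral>h. \<Phi>(k,h) \<partial>M) = (\<integral>h. \<Phi>(k, inv\<^bsub>G\<^esub> k \<otimes>\<^bsub>G\<^esub> h) \<partial>M)"
      by (rule left_invar[OF ik, symmetric]) (rule cont_slice[OF c\<Phi> k])
    also have "\<dots> = (\<integral>h. f (x \<otimes>\<^bsub>G\<^esub> k \<otimes>\<^bsub>G\<^esub> z \<otimes>\<^bsub>G\<^esub> inv\<^bsub>G\<^esub> k \<otimes>\<^bsub>G\<^esub> h \<otimes>\<^bsub>G\<^esub> u \<otimes>\<^bsub>G\<^esub> inv\<^bsub>G\<^esub> h) \<partial>M)"
      by (rule Bochner_Integration.integral_cong[OF refl])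
         (use k KG x z u in \<open>auto simp: \<Phi>_def spM intro!: arg_cong[where f=f] alg\<close>)
    finally show ?thesis .
  qed
  show "(\<integral>h. (\<integral>k. f (x \<otimes>\<^bsub>G\<^esub> k \<otimes>\<^bsub>G\<^esub> (z \<otimes>\<^bsub>G\<^esub> h \<otimes>\<^bsub>G\<^esub> u \<otimes>\<^bsub>G\<^esub> inv\<^bsub>G\<^esub> h) \<otimes>\<^bsub>G\<^esub> inv\<^bsub>G\<^esub> k) \<partial>M) \<partial>M)
       = (\<integral>k. (\<integral>h. f (x \<otimes>\<^bsub>G\<^esub> k \<otimes>\<^bsub>G\<^esub> z \<otimes>\<^bsub>G\<^esub> inv\<^bsub>G\<^esub> k \<otimes>\<^bsub>G\<^esub> h \<otimes>\<^bsub>G\<^esub> u \<otimes>\<^bsub>G\<^esub> inv\<^bsub>G\<^esub> h) \<partial>M) \<partial>M)"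
  proof -
    have "(\<integral>h. (\<integral>k. f (x \<otimes>\<^bsub>G\<^esub> k \<otimes>\<^bsub>G\<^esub> (z \<otimes>\<^bsub>G\<^esub> h \<otimes>\<^bsub>G\<^esub> u \<otimes>\<^bsub>G\<^esub> inv\<^bsub>G\<^esub> h) \<otimes>\<^bsub>G\<^esub> inv\<^bsub>G\<^esub> k) \<partial>M) \<partial>M)
       = (\<integral>k. (\<integral>h. \<Phi>(k,h) \<partial>M) \<partial>M)" using fb(1) by (simp add: \<Phi>_def)
    also have "\<dots> = (\<integral>k. (\<integral>h. f (x \<otimes>\<^bsub>G\<^esub> k \<otimes>\<^bsub>G\<^esub> z \<otimes>\<^bsub>G\<^esub> inv\<^bsub>G\<^esub> k \<otimes>\<^bsub>G\<^esub> h \<otimes>\<^bsub>G\<^esub> u \<otimes>\<^bsub>G\<^esub> inv\<^bsub>G\<^esub> h) \<partial>M) \<partial>M)"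
      by (rule Bochner_Integration.integral_cong[OF refl]) (simp add: eq spM)
    finally show ?thesis .
  qed
  show "integrable M (\<lambda>k. \<integral>h. f (x \<otimes>\<^bsub>G\<^esub> k \<otimes>\<^bsub>G\<^esub> z \<otimes>\<^bsub>G\<^esub> inv\<^bsub>G\<^esub> k \<otimes>\<^bsub>G\<^esub> h \<otimes>\<^bsub>G\<^esub> u \<otimes>\<^bsub>G\<^esub> inv\<^bsub>G\<^esub> h) \<partial>M)"
  proof -
    have "integrable M (\<lambda>k. \<integral>h. \<Phi>(k,h) \<partial>M) \<longleftrightarrow> integrable M (\<lambda>k. \<integral>h. f (x \<otimes>\<^bsub>G\<^esub> k \<otimes>\<^bsub>G\<^esub> z \<otimes>\<^bsub>G\<^esub> inv\<^bsub>G\<^esub> k \<otimes>\<^bsub>G\<^esub> h \<otimes>\<^bsub>G\<^esub> u \<otimes>\<^bsub>G\<^esub> inv\<^bsub>G\<^esub> h) \<partial>M)"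
      by (rule Bochner_Integration.integrable_cong) (simp_all add: eq spM)
    with fb(2) show ?thesis by simp
  qed
qed

end



lemma unb_zero:
  fixes f :: "'a \<Rightarrow> complex"
  assumes ub: "\<not> bounded (f ` S)" and b: "\<And>x. x \<in> S \<Longrightarrow> cmod (f x * c) \<le> B"
  shows "c = 0"
proof (rule ccontr)
  assume c: "c \<noteq> 0"
  have "cmod (f x) \<le> B / cmod c" if "x \<in> S" for x
    using b[OF that] c by (simp add: norm_mult field_simps)
  then have "bounded (f ` S)" unfolding bounded_iff by blast
  with ub show False by simp
qed

context hs begin

lemma partI:
  fixes f g \<mu> :: "'a \<Rightarrow> complex"
  assumes cf: "continuous_on (carrier G) f" and H: "satisfies_5_1 G M \<mu> \<delta> f g"
    and x: "x \<in> carrier G"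
  shows "satisfies_5_1 G M \<mu> \<delta> (\<lambda>y. \<integral>k. f (x \<otimes>\<^bsub>G\<^esub> k \<otimes>\<^bsub>G\<^esub> y \<otimes>\<^bsub>G\<^esub> inv\<^bsub>G\<^esub> k) \<partial>M) g"
  unfolding satisfies_5_1_def
proof (intro ballI)
  interpret G: group G by (rule grp)
  fix z y assume z: "z \<in> carrier G" and y: "y \<in> carrier G"
  define A1 where "A1 k = (\<integral>h. f (x \<otimes>\<^bsub>G\<^esub> k \<otimes>\<^bsub>G\<^esub> z \<otimes>\<^bsub>G\<^esub> inv\<^bsub>G\<^esub> k \<otimes>\<^bsub>G\<^esub> h \<otimes>\<^bsub>G\<^esub> y \<otimes>\<^bsub>G\<^esub> inv\<^bsub>G\<^esub> h) \<partial>M)" for k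
  define A2 where "A2 k = (\<integral>h. f (x \<otimes>\<^bsub>G\<^esub> k \<otimes>\<^bsub>G\<^esub> z \<otimes>\<^bsub>G\<^esub> inv\<^bsub>G\<^esub> k \<otimes>\<^bsub>G\<^esub> h \<otimes>\<^bsub>G\<^esub> inv\<^bsub>G\<^esub> y \<otimes>\<^bsub>G\<^esub> inv\<^bsub>G\<^esub> h) \<partial>M)" for k
  define W where "W k = f (x \<otimes>\<^bsub>G\<^esub> k \<otimes>\<^bsub>G\<^esub> z \<otimes>\<^bsub>G\<^esub> inv\<^bsub>G\<^esub> k)" for k
  note k1 = key[OF cf x z y] and k2 = key[OF cf x z G.inv_closed[OF y]]
  have i1: "integrable M A1" using k1(2) unfolding A1_def .
  have i2: "integrable M A2" using k2(2) unfolding A2_def .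
  have iw: "integrable M W" unfolding W_def
    by (rule int_M[OF sM spM pM cK], rule continuous_on_compose2[OF cf])
       (use KG x z in \<open>auto intro!: cont_m cont_i continuous_intros\<close>)
  have bd: "norm (A1 k + \<mu> y * A2 k - 2 * W k * g y) \<le> \<delta>" if k: "k \<in> space M" for k
  proof -
    have "x \<otimes>\<^bsub>G\<^esub> k \<otimes>\<^bsub>G\<^esub> z \<otimes>\<^bsub>G\<^esub> inv\<^bsub>G\<^esub> k \<in> carrier G" using k spM KG x z by auto
    then show ?thesis using H y unfolding satisfies_5_1_def A1_def A2_def W_def by blast
  qed
  have "(\<integral>k. A1 k + \<mu> y * A2 k - 2 * W k * g y \<partial>M)
      = (\<integral>k. A1 k \<partial>M) + \<mu> y * (\<integral>k. A2 k \<partial>M) - 2 * (\<integral>k. W k \<partial>M) * g y"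
    using i1 i2 iw by simp
  moreover have "norm (\<integral>k. A1 k + \<mu> y * A2 k - 2 * W k * g y \<partial>M) \<le> \<delta>"
    by (rule prob_norm_bound[OF pM _ bd]) (use i1 i2 iw in simp)
  ultimately show "cmod ((\<integral>k. (\<lambda>y. \<integral>k. f (x \<otimes>\<^bsub>G\<^esub> k \<otimes>\<^bsub>G\<^esub> y \<otimes>\<^bsub>G\<^esub> inv\<^bsub>G\<^esub> k) \<partial>M) (z \<otimes>\<^bsub>G\<^esub> k \<otimes>\<^bsub>G\<^esub> y \<otimes>\<^bsub>G\<^esub> inv\<^bsub>G\<^esub> k) \<partial>M)
            + \<mu> y * (\<integral>k. (\<lambda>y. \<integral>k. f (x \<otimes>\<^bsub>G\<^esub> k \<otimes>\<^bsub>G\<^esub> y \<otimes>\<^bsub>G\<^esub> inv\<^bsub>G\<^esub> k) \<partial>M) (z \<otimes>\<^bsub>G\<^esub> k \<otimes>\<^bsub>G\<^esub> inv\<^bsub>G\<^esub> y \<otimes>\<^bsub>G\<^esub> inv\<^bsub>G\<^esub> k) \<partial>M)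
            - 2 * (\<lambda>y. \<integral>k. f (x \<otimes>\<^bsub>G\<^esub> k \<otimes>\<^bsub>G\<^esub> y \<otimes>\<^bsub>G\<^esub> inv\<^bsub>G\<^esub> k) \<partial>M) z * g y) \<le> \<delta>"
    using k1(1) k2(1) unfolding A1_def A2_def W_def by simp
qed

end



context hs begin

lemma conj_int:
  fixes f :: "'a \<Rightarrow> complex"
  assumes cf: "continuous_on (carrier G) f" and x: "x \<in> carrier G" and u: "u \<in> carrier G"
    and k0: "k0 \<in> K"
  shows "(\<integral>k. f (x \<otimes>\<^bsub>G\<^esub> k \<otimes>\<^bsub>G\<^esub> (k0 \<otimes>\<^bsub>G\<^esub> u \<otimes>\<^bsub>G\<^esub> inv\<^bsub>G\<^esub> k0) \<otimes>\<^bsub>G\<^esub> inv\<^bsub>G\<^esub> k) \<partial>M)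
       = (\<integral>k. f (x \<otimes>\<^bsub>G\<^esub> k \<otimes>\<^bsub>G\<^esub> u \<otimes>\<^bsub>G\<^esub> inv\<^bsub>G\<^esub> k) \<partial>M)"
proof -
  interpret G: group G by (rule grp)
  have k0G: "k0 \<in> carrier G" using k0 KG by auto
  have c: "continuous_on K (\<lambda>k. f (x \<otimes>\<^bsub>G\<^esub> k \<otimes>\<^bsub>G\<^esub> u \<otimes>\<^bsub>G\<^esub> inv\<^bsub>G\<^esub> k))"
    by (rule continuous_on_compose2[OF cf]) (use KG x u in \<open>auto intro!: cont_m cont_i continuous_intros\<close>)
  have "(\<integral>k. f (x \<otimes>\<^bsub>G\<^esub> k \<otimes>\<^bsub>G\<^esub> (k0 \<otimes>\<^bsub>G\<^esub> u \<otimes>\<^bsub>G\<^esub> inv\<^bsub>G\<^esub> k0) \<otimes>\<^bsub>G\<^esub> inv\<^bsub>G\<^esub> k) \<partial>M)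
      = (\<integral>k. f (x \<otimes>\<^bsub>G\<^esub> (k \<otimes>\<^bsub>G\<^esub> k0) \<otimes>\<^bsub>G\<^esub> u \<otimes>\<^bsub>G\<^esub> inv\<^bsub>G\<^esub> (k \<otimes>\<^bsub>G\<^esub> k0)) \<partial>M)"
    by (rule Bochner_Integration.integral_cong[OF refl])
       (use KG x u k0G in \<open>auto simp: spM G.m_assoc G.inv_mult_group\<close>)
  also have "\<dots> = (\<integral>k. f (x \<otimes>\<^bsub>G\<^esub> k \<otimes>\<^bsub>G\<^esub> u \<otimes>\<^bsub>G\<^esub> inv\<^bsub>G\<^esub> k) \<partial>M)"
    by (rule right_invar[OF k0 c])
  finally show ?thesis .
qed

lemma mu_inv:
  assumes mu: "unitary_character G \<mu>" and y: "y \<in> carrier G"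
  shows "\<mu> y * \<mu> (inv\<^bsub>G\<^esub> y) = 1"
proof -
  interpret G: group G by (rule grp)
  have m: "\<And>a b. a \<in> carrier G \<Longrightarrow> b \<in> carrier G \<Longrightarrow> \<mu> (a \<otimes>\<^bsub>G\<^esub> b) = \<mu> a * \<mu> b"
    and n: "\<And>a. a \<in> carrier G \<Longrightarrow> cmod (\<mu> a) = 1" using mu unfolding unitary_character_def by auto
  have "\<mu> \<one>\<^bsub>G\<^esub> = \<mu> \<one>\<^bsub>G\<^esub> * \<mu> \<one>\<^bsub>G\<^esub>" using m[of "\<one>\<^bsub>G\<^esub>" "\<one>\<^bsub>G\<^esub>"] by simp
  moreover have "\<mu> \<one>\<^bsub>G\<^esub> \<noteq> 0" using n[of "\<one>\<^bsub>G\<^esub>"] by auto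
  ultimately have "\<mu> \<one>\<^bsub>G\<^esub> = 1" by simp
  then show ?thesis using m[of y "inv\<^bsub>G\<^esub> y"] y by simp
qed

lemma partII:
  fixes f g \<mu> :: "'a \<Rightarrow> complex"
  assumes H: "satisfies_5_1 G M \<mu> \<delta> f g" and mu: "unitary_character G \<mu>"
    and ub: "\<not> bounded (f ` carrier G)" and y: "y \<in> carrier G"
  shows "g y = \<mu> y * g (inv\<^bsub>G\<^esub> y)"
proof -
  interpret G: group G by (rule grp)
  have my: "\<mu> y * \<mu> (inv\<^bsub>G\<^esub> y) = 1" by (rule mu_inv[OF mu y])
  have ny: "cmod (\<mu> y) = 1" using mu y unfolding unitary_character_def by auto
  have "2 * (g y - \<mu> y * g (inv\<^bsub>G\<^esub> y)) = 0"
  proof (rule unb_zero[OF ub])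
    fix x assume x: "x \<in> carrier G"
    define I1 where "I1 = (\<integral>k. f (x \<otimes>\<^bsub>G\<^esub> k \<otimes>\<^bsub>G\<^esub> y \<otimes>\<^bsub>G\<^esub> inv\<^bsub>G\<^esub> k) \<partial>M)"
    define I2 where "I2 = (\<integral>k. f (x \<otimes>\<^bsub>G\<^esub> k \<otimes>\<^bsub>G\<^esub> inv\<^bsub>G\<^esub> y \<otimes>\<^bsub>G\<^esub> inv\<^bsub>G\<^esub> k) \<partial>M)"
    have Ea: "cmod (I1 + \<mu> y * I2 - 2 * f x * g y) \<le> \<delta>"
      using H x y unfolding satisfies_5_1_def I1_def I2_def by blast
    have Eb: "cmod (I2 + \<mu> (inv\<^bsub>G\<^esub> y) * I1 - 2 * f x * g (inv\<^bsub>G\<^esub> y)) \<le> \<delta>"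
      using bspec[OF bspec[OF H[unfolded satisfies_5_1_def] x] G.inv_closed[OF y]] y
      unfolding I1_def I2_def by (simp add: G.inv_inv)
    have eq: "f x * (2 * (g y - \<mu> y * g (inv\<^bsub>G\<^esub> y)))
        = \<mu> y * (I2 + \<mu> (inv\<^bsub>G\<^esub> y) * I1 - 2 * f x * g (inv\<^bsub>G\<^esub> y)) - (I1 + \<mu> y * I2 - 2 * f x * g y)"
    proof -
      have "\<mu> y * (\<mu> (inv\<^bsub>G\<^esub> y) * I1) = I1" by (simp add: mult.assoc[symmetric] my)
      then show ?thesis by (simp add: algebra_simps)
    qed
    have "cmod (\<mu> y * (I2 + \<mu> (inv\<^bsub>G\<^esub> y) * I1 - 2 * f x * g (inv\<^bsub>G\<^esub> y)) - (I1 + \<mu> y * I2 - 2 * f x * g y))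
        \<le> cmod (\<mu> y * (I2 + \<mu> (inv\<^bsub>G\<^esub> y) * I1 - 2 * f x * g (inv\<^bsub>G\<^esub> y))) + cmod (I1 + \<mu> y * I2 - 2 * f x * g y)"
      by (rule norm_triangle_ineq4)
    also have "\<dots> \<le> \<delta> + \<delta>" using Ea Eb ny by (simp add: norm_mult)
    finally show "cmod (f x * (2 * (g y - \<mu> y * g (inv\<^bsub>G\<^esub> y)))) \<le> \<delta> + \<delta>" unfolding eq .
  qed
  then show ?thesis by simp
qed

lemma partIII:
  fixes f g \<mu> :: "'a \<Rightarrow> complex"
  assumes cf: "continuous_on (carrier G) f" and H: "satisfies_5_1 G M \<mu> \<delta> f g" and mu: "unitary_character G \<mu>"
    and ub: "\<not> bounded (f ` carrier G)"
  shows "K_central G K g"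
proof -
  interpret G: group G by (rule grp)
  have m: "\<And>a b. a \<in> carrier G \<Longrightarrow> b \<in> carrier G \<Longrightarrow> \<mu> (a \<otimes>\<^bsub>G\<^esub> b) = \<mu> a * \<mu> b"
    using mu unfolding unitary_character_def by auto
  have conj: "g (k0 \<otimes>\<^bsub>G\<^esub> y \<otimes>\<^bsub>G\<^esub> inv\<^bsub>G\<^esub> k0) = g y" if k0: "k0 \<in> K" and y: "y \<in> carrier G" for k0 y
  proof -
    have k0G: "k0 \<in> carrier G" using k0 KG by auto
    define y' where "y' = k0 \<otimes>\<^bsub>G\<^esub> y \<otimes>\<^bsub>G\<^esub> inv\<^bsub>G\<^esub> k0"
    have y'G: "y' \<in> carrier G" using k0G y unfolding y'_def by simp
    have iy': "inv\<^bsub>G\<^esub> y' = k0 \<otimes>\<^bsub>G\<^esub> inv\<^bsub>G\<^esub> y \<otimes>\<^bsub>G\<^esub> inv\<^bsub>G\<^esub> k0"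
      using k0G y unfolding y'_def by (simp add: G.inv_mult_group G.m_assoc)
    have muy': "\<mu> y' = \<mu> y"
    proof -
      have "\<mu> y' = \<mu> y * (\<mu> k0 * \<mu> (inv\<^bsub>G\<^esub> k0))" using k0G y unfolding y'_def by (simp add: m)
      then show ?thesis using mu_inv[OF mu k0G] by simp
    qed
    have "2 * (g y' - g y) = 0"
    proof (rule unb_zero[OF ub])
      fix x assume x: "x \<in> carrier G"
      define I1 where "I1 = (\<integral>k. f (x \<otimes>\<^bsub>G\<^esub> k \<otimes>\<^bsub>G\<^esub> y \<otimes>\<^bsub>G\<^esub> inv\<^bsub>G\<^esub> k) \<partial>M)"
      define I2 where "I2 = (\<integral>k. f (x \<otimes>\<^bsub>G\<^esub> k \<otimes>\<^bsub>G\<^esub> inv\<^bsub>G\<^esub> y \<otimes>\<^bsub>G\<^esub> inv\<^bsub>G\<^esub> k) \<partial>M)"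
      have Ea: "cmod (I1 + \<mu> y * I2 - 2 * f x * g y) \<le> \<delta>"
        using H x y unfolding satisfies_5_1_def I1_def I2_def by blast
      have Eb0: "cmod ((\<integral>k. f (x \<otimes>\<^bsub>G\<^esub> k \<otimes>\<^bsub>G\<^esub> y' \<otimes>\<^bsub>G\<^esub> inv\<^bsub>G\<^esub> k) \<partial>M)
            + \<mu> y' * (\<integral>k. f (x \<otimes>\<^bsub>G\<^esub> k \<otimes>\<^bsub>G\<^esub> inv\<^bsub>G\<^esub> y' \<otimes>\<^bsub>G\<^esub> inv\<^bsub>G\<^esub> k) \<partial>M)
            - 2 * f x * g y') \<le> \<delta>"
        using H x y'G unfolding satisfies_5_1_def by blast
      have Eb: "cmod (I1 + \<mu> y * I2 - 2 * f x * g y') \<le> \<delta>"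
        using Eb0 unfolding muy' iy' I1_def I2_def
        unfolding y'_def conj_int[OF cf x y k0] conj_int[OF cf x G.inv_closed[OF y] k0] .
      have eq: "f x * (2 * (g y' - g y)) = (I1 + \<mu> y * I2 - 2 * f x * g y) - (I1 + \<mu> y * I2 - 2 * f x * g y')"
        by (simp add: algebra_simps)
      have "cmod ((I1 + \<mu> y * I2 - 2 * f x * g y) - (I1 + \<mu> y * I2 - 2 * f x * g y')) \<le> \<delta> + \<delta>"
        using norm_triangle_ineq4[of "I1 + \<mu> y * I2 - 2 * f x * g y" "I1 + \<mu> y * I2 - 2 * f x * g y'"] Ea Eb
        by linarith
      then show "cmod (f x * (2 * (g y' - g y))) \<le> \<delta> + \<delta>" unfolding eq .
    qed
    then show ?thesis unfolding y'_def by simp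
  qed
  show ?thesis unfolding K_central_def
  proof (intro ballI)
    fix k x assume k: "k \<in> K" and x: "x \<in> carrier G"
    have kG: "k \<in> carrier G" using k KG by auto
    have "k \<otimes>\<^bsub>G\<^esub> x = k \<otimes>\<^bsub>G\<^esub> (x \<otimes>\<^bsub>G\<^esub> k) \<otimes>\<^bsub>G\<^esub> inv\<^bsub>G\<^esub> k"
      using kG x by (simp add: G.m_assoc)
    then show "g (k \<otimes>\<^bsub>G\<^esub> x) = g (x \<otimes>\<^bsub>G\<^esub> k)" using conj[OF k] x kG by simp
  qed
qed

end


theorem lemma5p1:
  fixes G :: "('a::t2_space, 'b) monoid_scheme" and K :: "'a set" and M :: "'a measure"
    and \<mu> f g :: "'a \<Rightarrow> complex" and \<delta> :: real
  assumes "lc_group G"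
    and "subgroup K G" and "compact K"
    and "normalized_haar G K M"
    and "\<delta> > 0"
    and "unitary_character G \<mu>"
    and "continuous_on (carrier G) f" and "continuous_on (carrier G) g"
    and "\<not> bounded (f ` carrier G)"
    and "satisfies_5_1 G M \<mu> \<delta> f g"
  shows "(\<forall>x\<in>carrier G.
            satisfies_5_1 G M \<mu> \<delta> (\<lambda>y. \<integral>k. f (x \<otimes>\<^bsub>G\<^esub> k \<otimes>\<^bsub>G\<^esub> y \<otimes>\<^bsub>G\<^esub> inv\<^bsub>G\<^esub> k) \<partial>M) g)
       \<and> (\<forall>y\<in>carrier G. g y = \<mu> y * g (inv\<^bsub>G\<^esub> y))
       \<and> K_central G K g"
proof -
  have lc: "group G" "continuous_on (carrier G \<times> carrier G) (\<lambda>p. fst p \<otimes>\<^bsub>G\<^esub> snd p)"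
    "continuous_on (carrier G) (\<lambda>x. inv\<^bsub>G\<^esub> x)" using assms(1) unfolding lc_group_def by blast+
  have nh: "sets M = sets (restrict_space borel K)" "space M = K" "prob_space M"
    "\<And>h. h \<in> K \<Longrightarrow> distr M M (\<lambda>k. h \<otimes>\<^bsub>G\<^esub> k) = M"
    "\<And>h. h \<in> K \<Longrightarrow> distr M M (\<lambda>k. k \<otimes>\<^bsub>G\<^esub> h) = M"
    using assms(4) unfolding normalized_haar_def by blast+
  interpret hs G K M
    by (rule hs.intro[OF lc assms(2,3) nh])
  have i: "\<forall>x\<in>carrier G. satisfies_5_1 G M \<mu> \<delta> (\<lambda>y. \<integral>k. f (x \<otimes>\<^bsub>G\<^esub> k \<otimes>\<^bsub>G\<^esub> y \<otimes>\<^bsub>G\<^esub> inv\<^bsub>G\<^esub> k) \<partial>M) g"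
    using partI[OF assms(7,10)] by blast
  have ii: "\<forall>y\<in>carrier G. g y = \<mu> y * g (inv\<^bsub>G\<^esub> y)"
    using partII[OF assms(10,6,9)] by blast
  have iii: "K_central G K g" by (rule partIII[OF assms(7,10,6,9)])
  show ?thesis using i ii iii by blast
qed

end
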